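(* Let $K\subseteq L$ be convex bodies in $\mathbb{R}^d$ such that the origin is in the interior of $K\cap L$, and assume there is no nonempty finite collection of contact pairs $(v_1,p_1),\dots,(v_m,p_m)$ of $K$ and $L$ together with positive weights $\alpha_1,\dots,\alpha_m$ satisfying \[ \sum_{i=1}^m\alpha_i\,p_i\otimes v_i=\sum_{i=1}^m\alpha_i\,v_i\otimes p_i. \] Then for some $\varepsilon>0$ there is a differentiable path $R_t$, $t\in(0,\varepsilon]$, of orthogonal transformations of $\mathbb{R}^d$ such that $R_tK\subset\operatorname{int}L$ for all $t\in(0,\varepsilon]$.
   Context: A convex body is a compact convex set with nonempty interior. The polar of $S$ is $S^\circ=\{p:\langle x,p\rangle\le1\ \forall x\in S\}$. For convex bodies $K\subseteq L$, a contact pair of $K$ and $L$ is a pair $(v,p)$ with $v\in\partial K\cap\partial L$, $p\in\partial K^\circ\cap\partial L^\circ$, $\langle p,v\rangle=1$. For vectors $p,v$, $p\otimes v$ is the operator $x\mapsto\langle v,x\rangle p$. *)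

theory Defs
  imports "HOL-Analysis.Analysis"
begin

definition convex_body :: "(real^'n) set \<Rightarrow> bool" where
  "convex_body S \<longleftrightarrow> compact S \<and> convex S \<and> interior S \<noteq> {}"

definition polar :: "(real^'n) set \<Rightarrow> (real^'n) set" where
  "polar S = {p. \<forall>x\<in>S. inner x p \<le> 1}"

definition contact_pair :: "(real^'n) set \<Rightarrow> (real^'n) set \<Rightarrow> real^'n \<Rightarrow> real^'n \<Rightarrow> bool" where
  "contact_pair K L v p \<longleftrightarrow>
     v \<in> frontier K \<inter> frontier L \<and>
     p \<in> frontier (polar K) \<inter> frontier (polar L) \<and>
     inner p v = 1"

text \<open>Matrix of the operator p \<otimes> v : x \<mapsto> (v \<bullet> x) p, i.e. p v^T.\<close>
definition tensor :: "real^'n \<Rightarrow> real^'n \<Rightarrow> real^'n^'n" where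
  "tensor p v = (\<chi> i j. p$i * v$j)"

end

theory Submission
  imports Defs
begin


lemma skew_formula:
  fixes a :: "real^'n^'n"
  shows "inner p ((a - transpose a) *v x) = inner a (tensor p x - tensor x p)"
proof -
  have l: "inner p ((a - transpose a) *v x) =
    (\<Sum>i\<in>UNIV. \<Sum>j\<in>UNIV. a$i$j * p$i * x$j) - (\<Sum>i\<in>UNIV. \<Sum>j\<in>UNIV. a$j$i * p$i * x$j)"
    unfolding inner_vec_def matrix_vector_mult_def transpose_def
    by (simp add: sum_distrib_left sum_subtractf algebra_simps inner_real_def)
  have r: "inner a (tensor p x - tensor x p) =
    (\<Sum>i\<in>UNIV. \<Sum>j\<in>UNIV. a$i$j * p$i * x$j) - (\<Sum>i\<in>UNIV. \<Sum>j\<in>UNIV. a$i$j * x$i * p$j)"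
    unfolding inner_vec_def tensor_def
    by (simp add: sum_distrib_left sum_subtractf algebra_simps inner_real_def)
  have s: "(\<Sum>i\<in>UNIV. \<Sum>j\<in>UNIV. a$j$i * p$i * x$j) = (\<Sum>i\<in>UNIV. \<Sum>j\<in>UNIV. a$i$j * x$i * p$j)"
    by (subst sum.swap) (simp add: mult_ac)
  show ?thesis unfolding l r s ..
qed

lemma skew0:
  fixes a :: "real^'n^'n"
  shows "inner y ((a - transpose a) *v y) = 0"
  using skew_formula[of y a y] by simp

lemma cayley_alg:
  fixes u w z :: "'a::real_vector"
  shows "u - t *\<^sub>R w = (u + t *\<^sub>R w) - (2*t) *\<^sub>R (w + t *\<^sub>R z) + (2*t^2) *\<^sub>R z"
proof -
  have a: "(2*t) *\<^sub>R w = t *\<^sub>R w + t *\<^sub>R w"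
    by (metis mult_2 scaleR_left_distrib)
  have b: "(2*t) *\<^sub>R (t *\<^sub>R z) = (2*t^2) *\<^sub>R z"
    by (simp add: power2_eq_square)
  have c: "(2*t) *\<^sub>R (w + t *\<^sub>R z) = t *\<^sub>R w + t *\<^sub>R w + (2*t^2) *\<^sub>R z"
    unfolding scaleR_add_right a b ..
  show ?thesis unfolding c by (simp add: algebra_simps)
qed

lemma cayley:
  fixes S :: "real^'n^'n"
  assumes sk: "\<And>y. inner y (S *v y) = 0"
  shows "\<exists>R. orthogonal_matrix R \<and> (\<forall>x. \<exists>y. norm y \<le> norm x \<and>
     R *v x = x - (2*t) *\<^sub>R (S *v x) + (2*t^2) *\<^sub>R (S *v (S *v y)))"
proof -
  define A where "A = mat 1 + t *\<^sub>R S"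
  have Av: "A *v y = y + t *\<^sub>R (S *v y)" for y
    by (simp add: A_def matrix_vector_mult_add_rdistrib scaleR_matrix_vector_assoc)
  have nA: "norm (A *v y) ^ 2 = norm y ^ 2 + t^2 * norm (S *v y) ^ 2" for y
    unfolding Av power2_norm_eq_inner using sk[of y]
    by (simp add: inner_add_left inner_add_right inner_commute power2_eq_square)
  have "inj ((*v) A)"
  proof (rule injI)
    fix x y assume "A *v x = A *v y"
    then have "A *v (x - y) = 0" by (simp add: matrix_vector_mult_diff_distrib)
    then have "0 = norm (x-y)^2 + t^2 * norm (S *v (x-y))^2" using nA[of "x-y"] by simp
    moreover have "t^2 * norm (S *v (x-y))^2 \<ge> 0" by simp
    moreover have "norm (x-y)^2 \<ge> 0" by simp
    ultimately have "norm (x - y) ^ 2 = 0" by linarith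
    then show "x = y" by simp
  qed
  then obtain B where BA: "B ** A = mat 1" using matrix_left_invertible_injective[of A] by auto
  have AB: "A ** B = mat 1" using matrix_left_right_inverse[of B A] BA by simp
  define R where "R = (mat 1 - t *\<^sub>R S) ** B"
  have Rv: "R *v x = B *v x - t *\<^sub>R (S *v (B *v x))" for x
    by (simp add: R_def matrix_vector_mul_assoc[symmetric] matrix_vector_mult_diff_rdistrib scaleR_matrix_vector_assoc)
  have xB: "x = B *v x + t *\<^sub>R (S *v (B *v x))" for x
    using Av[of "B *v x"] by (simp add: matrix_vector_mul_assoc AB)
  have nR: "norm (R *v x) = norm x" for x
  proof -
    let ?y = "B *v x"
    have "norm (R *v x) ^ 2 = norm ?y ^ 2 + t^2 * norm (S *v ?y) ^ 2"
      unfolding Rv power2_norm_eq_inner using sk[of ?y]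
      by (simp add: inner_diff_left inner_diff_right inner_commute power2_eq_square)
    also have "\<dots> = norm x ^ 2"
    proof -
      have "A *v ?y = x" by (simp add: matrix_vector_mul_assoc AB)
      then show ?thesis using nA[of ?y] by simp
    qed
    finally show ?thesis by (simp add: power2_eq_iff_nonneg)
  qed
  have "orthogonal_transformation ((*v) R)"
    unfolding orthogonal_transformation using nR by simp
  then have oR: "orthogonal_matrix R"
    using orthogonal_transformation_matrix[of "(*v) R"] by simp
  have key: "\<exists>y. norm y \<le> norm x \<and>
     R *v x = x - (2*t) *\<^sub>R (S *v x) + (2*t^2) *\<^sub>R (S *v (S *v y))" for x
  proof -
    define y where "y = B *v x"
    have hx: "x = y + t *\<^sub>R (S *v y)" unfolding y_def by (rule xB)
    have Ay: "A *v y = x" unfolding y_def by (simp add: matrix_vector_mul_assoc AB)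
    have "norm x ^ 2 = norm y ^ 2 + t^2 * norm (S *v y) ^ 2" using nA[of y] unfolding Ay .
    moreover have "t^2 * norm (S *v y) ^ 2 \<ge> 0" by simp
    ultimately have n2: "norm y ^ 2 \<le> norm x ^ 2" by linarith
    have ny: "norm y \<le> norm x" using power2_le_imp_le[OF n2] by simp
    have Sx: "S *v x = S *v y + t *\<^sub>R (S *v (S *v y))"
      using arg_cong[OF hx, of "\<lambda>v. S *v v"] by (simp add: matrix_vector_right_distrib matrix_vector_mult_scaleR)
    have "R *v x = y - t *\<^sub>R (S *v y)" unfolding Rv y_def ..
    also have "\<dots> = x - (2*t) *\<^sub>R (S *v x) + (2*t^2) *\<^sub>R (S *v (S *v y))"
      unfolding Sx by (subst hx) (rule cayley_alg)
    finally show ?thesis using ny by blast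
  qed
  show ?thesis
  proof (intro exI[of _ R] conjI allI)
    show "orthogonal_matrix R" by (rule oR)
    fix x show "\<exists>y. norm y \<le> norm x \<and>
     R *v x = x - (2*t) *\<^sub>R (S *v x) + (2*t^2) *\<^sub>R (S *v (S *v y))" by (rule key)
  qed
qed



lemma polar_closed: "closed (polar S)"
proof -
  have "polar S = (\<Inter>x\<in>S. {p. inner x p \<le> 1})" by (auto simp: polar_def)
  moreover have "closed {p. inner x p \<le> (1::real)}" for x :: "real^'n"
    by (intro closed_Collect_le continuous_intros)
  ultimately show ?thesis by auto
qed

lemma polar_bounded:
  fixes S :: "(real^'n) set"
  assumes "0 \<in> interior S"
  shows "bounded (polar S)"
proof -
  obtain e where e: "e > 0" "ball 0 e \<subseteq> S" using assms mem_interior by blast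
  have "norm p \<le> 2 / e" if p: "p \<in> polar S" for p
  proof (cases "p = 0")
    case False
    let ?x = "(e/2 / norm p) *\<^sub>R p"
    have "norm ?x < e" using e False by simp
    then have "?x \<in> S" using e by auto
    then have "inner ?x p \<le> 1" using p by (auto simp: polar_def)
    then have "e/2 / norm p * norm p ^2 \<le> 1" by (simp add: power2_norm_eq_inner)
    then have "e/2 * norm p \<le> 1" using False by (simp add: power2_eq_square)
    then show ?thesis using e by (simp add: field_simps)
  qed (use e in simp)
  then show ?thesis by (auto simp: bounded_iff)
qed

lemma polar_compact:
  fixes S :: "(real^'n) set"
  assumes "0 \<in> interior S"
  shows "compact (polar S)"
  using polar_closed polar_bounded[OF assms] by (simp add: compact_eq_bounded_closed)

lemma interior_lt1:
  fixes L :: "(real^'n) set"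
  assumes "z \<in> interior L" "p \<in> polar L"
  shows "inner z p < 1"
proof (cases "p = 0")
  case False
  obtain e where e: "e > 0" "ball z e \<subseteq> L" using assms mem_interior by blast
  let ?x = "z + (e/2 / norm p) *\<^sub>R p"
  have "dist z ?x < e" using e False by (simp add: dist_norm)
  then have "?x \<in> L" using e by auto
  then have "inner ?x p \<le> 1" using assms by (auto simp: polar_def)
  moreover have "inner ?x p = inner z p + e/2 * norm p"
    using False by (simp add: inner_add_left power2_norm_eq_inner[symmetric] power2_eq_square)
  moreover have "e/2 * norm p > 0" using e False by simp
  ultimately show ?thesis by linarith
qed simp

lemma interior_char:
  fixes L :: "(real^'n) set"
  assumes "compact L" "convex L" "0 \<in> interior L" "\<forall>p\<in>polar L. inner z p < 1"
  shows "z \<in> interior L"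
proof (rule ccontr)
  assume nz: "z \<notin> interior L"
  have "convex (interior L)" using assms convex_interior by blast
  moreover have "0 \<notin> (\<lambda>y. y - z) ` interior L" using nz by auto
  ultimately obtain a where a: "a \<noteq> 0" "\<forall>x\<in>(\<lambda>y. y - z) ` interior L. 0 \<le> inner a x"
    using separating_hyperplane_set_0[of "(\<lambda>y. y - z) ` interior L"]
    by (metis convex_translation_subtract_eq)
  have ai: "inner a y \<ge> inner a z" if "y \<in> interior L" for y
    using a(2) that by (force simp: inner_diff_right)
  have aL: "inner a y \<ge> inner a z" if "y \<in> L" for y
  proof -
    have "y \<in> closure (interior L)"
      using assms that convex_closure_interior[of L] closure_closed compact_imp_closed by fastforce
    moreover have "closed {y. inner a y \<ge> inner a z}"
      by (intro closed_Collect_le continuous_intros)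
    ultimately show ?thesis using ai closure_minimal[of "interior L" "{y. inner a y \<ge> inner a z}"] by auto
  qed
  obtain e where e: "e > 0" "ball 0 e \<subseteq> interior L"
    using assms open_interior open_contains_ball by blast
  let ?y = "(- e/2 / norm a) *\<^sub>R a"
  have "norm ?y < e" using e a by simp
  then have "?y \<in> interior L" using e by auto
  then have "inner a ?y \<ge> inner a z" using ai by blast
  moreover have "inner a ?y = - e/2 * norm a"
    using a by (simp add: power2_norm_eq_inner[symmetric] power2_eq_square)
  moreover have "e/2 * norm a > 0" using e a by simp
  ultimately have c: "- inner a z > 0" by linarith
  define p where "p = (1 / (- inner a z)) *\<^sub>R (- a)"
  have "p \<in> polar L"
    unfolding polar_def p_def using aL c by (auto simp: field_simps inner_commute)
  moreover have "inner z p = 1" unfolding p_def using c by (simp add: inner_commute)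
  ultimately show False using assms(4) by force
qed



lemma contact:
  fixes K L :: "(real^'n) set"
  assumes "K \<subseteq> L" "closed K" "closed L" "v \<in> K" "p \<in> polar L" "inner v p = 1"
  shows "contact_pair K L v p"
proof -
  have vL: "v \<notin> interior L" using interior_lt1[of v L p] assms by auto
  have vK: "v \<notin> interior K" using vL interior_mono[OF assms(1)] by auto
  have pK: "p \<in> polar K" using assms unfolding polar_def by auto
  have vpp: "v \<in> polar (polar S)" if "v \<in> S" for S :: "(real^'n) set"
    using that by (auto simp: polar_def inner_commute)
  have "p \<notin> interior (polar S)" if "v \<in> S" for S :: "(real^'n) set"
    using interior_lt1[of p "polar S" v] vpp[OF that] assms(6) by (auto simp: inner_commute)
  then have "p \<notin> interior (polar K)" "p \<notin> interior (polar L)" using assms by auto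
  then show ?thesis unfolding contact_pair_def frontier_def
    using assms vL vK pK closure_subset by (auto simp: inner_commute)
qed

lemma no_zero_hull:
  fixes K L :: "(real^'n) set"
  assumes H: "\<not> (\<exists>m::nat. \<exists>v p :: nat \<Rightarrow> real^'n. \<exists>\<alpha> :: nat \<Rightarrow> real.
            m > 0 \<and> (\<forall>i<m. contact_pair K L (v i) (p i) \<and> \<alpha> i > 0) \<and>
            (\<Sum>i<m. \<alpha> i *\<^sub>R tensor (p i) (v i)) = (\<Sum>i<m. \<alpha> i *\<^sub>R tensor (v i) (p i)))"
    and C0: "\<forall>z\<in>C. contact_pair K L (fst z) (snd z)"
  shows "0 \<notin> convex hull ((\<lambda>z. tensor (snd z) (fst z) - tensor (fst z) (snd z)) ` C)"
proof
  let ?phi = "\<lambda>z. tensor (snd z) (fst z) - tensor (fst z) (snd z)"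
  assume "0 \<in> convex hull (?phi ` C)"
  then obtain T u where T: "finite T" "T \<subseteq> ?phi ` C" "\<forall>x\<in>T. 0 \<le> u x" "sum u T = 1"
      "(\<Sum>v\<in>T. u v *\<^sub>R v) = 0"
    unfolding convex_hull_explicit by blast
  define T' where "T' = {x\<in>T. u x > 0}"
  have fT': "finite T'" using T unfolding T'_def by auto
  have s1: "sum u T' = 1"
  proof -
    have "sum u T = sum u T'" unfolding T'_def
      by (rule sum.mono_neutral_right) (use T in \<open>auto simp: less_le\<close>)
    then show ?thesis using T by simp
  qed
  have s0: "(\<Sum>v\<in>T'. u v *\<^sub>R v) = 0"
  proof -
    have "(\<Sum>v\<in>T. u v *\<^sub>R v) = (\<Sum>v\<in>T'. u v *\<^sub>R v)" unfolding T'_def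
      by (rule sum.mono_neutral_right) (use T in \<open>auto simp: less_le\<close>)
    then show ?thesis using T by simp
  qed
  have ne: "T' \<noteq> {}" using s1 by auto
  obtain h where h: "bij_betw h {0..<card T'} T'" using ex_bij_betw_nat_finite[OF fT'] by blast
  have "\<forall>M\<in>?phi ` C. \<exists>z. z \<in> C \<and> ?phi z = M" by blast
  from bchoice[OF this] obtain w where w: "\<forall>M\<in>?phi ` C. w M \<in> C \<and> ?phi (w M) = M"
    by blast
  define m where "m = card T'"
  define v where "v i = fst (w (h i))" for i
  define p where "p i = snd (w (h i))" for i
  define \<alpha> where "\<alpha> i = u (h i)" for i
  have hT: "i < m \<Longrightarrow> h i \<in> T'" for i using h unfolding m_def bij_betw_def by auto
  have hphi: "i < m \<Longrightarrow> h i \<in> ?phi ` C" for i using hT T unfolding T'_def by auto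
  have mpos: "m > 0" using ne fT' unfolding m_def by auto
  have cp: "\<forall>i<m. contact_pair K L (v i) (p i) \<and> \<alpha> i > 0"
  proof (intro allI impI conjI)
    fix i assume i: "i < m"
    have "w (h i) \<in> C" using hphi[OF i] w by blast
    then show "contact_pair K L (v i) (p i)" using C0 unfolding v_def p_def by blast
    show "\<alpha> i > 0" using hT[OF i] unfolding \<alpha>_def T'_def by blast
  qed
  have "(\<Sum>i<m. \<alpha> i *\<^sub>R (tensor (p i) (v i) - tensor (v i) (p i))) = 0"
  proof -
    have "(\<Sum>i<m. \<alpha> i *\<^sub>R (tensor (p i) (v i) - tensor (v i) (p i))) = (\<Sum>i<m. u (h i) *\<^sub>R h i)"
    proof (rule sum.cong)
      fix i assume "i \<in> {..<m}"
      then have "?phi (w (h i)) = h i" using hphi w by blast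
      then show "\<alpha> i *\<^sub>R (tensor (p i) (v i) - tensor (v i) (p i)) = u (h i) *\<^sub>R h i"
        unfolding v_def p_def \<alpha>_def by simp
    qed simp
    also have "\<dots> = (\<Sum>M\<in>T'. u M *\<^sub>R M)"
      using sum.reindex_bij_betw[OF h, of "\<lambda>M. u M *\<^sub>R M"] unfolding m_def
      by (simp add: atLeast0LessThan)
    finally show ?thesis using s0 by simp
  qed
  then have eq: "(\<Sum>i<m. \<alpha> i *\<^sub>R tensor (p i) (v i)) = (\<Sum>i<m. \<alpha> i *\<^sub>R tensor (v i) (p i))"
    by (simp add: scaleR_diff_right sum_subtractf)
  show False
    apply (rule notE[OF H])
    apply (rule exI[of _ m], rule exI[of _ v], rule exI[of _ p], rule exI[of _ \<alpha>])
    using mpos cp eq by blast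
qed



theorem mainTheorem6:
  fixes K L :: "(real^'n) set"
  assumes "convex_body K" and "convex_body L" and "K \<subseteq> L"
    and "0 \<in> interior (K \<inter> L)"
    and "\<not> (\<exists>m::nat. \<exists>v p :: nat \<Rightarrow> real^'n. \<exists>\<alpha> :: nat \<Rightarrow> real.
            m > 0 \<and> (\<forall>i<m. contact_pair K L (v i) (p i) \<and> \<alpha> i > 0) \<and>
            (\<Sum>i<m. \<alpha> i *\<^sub>R tensor (p i) (v i)) = (\<Sum>i<m. \<alpha> i *\<^sub>R tensor (v i) (p i)))"
  shows "\<exists>\<epsilon>>0. \<exists>R :: real \<Rightarrow> real^'n^'n.
           R differentiable_on {0<..\<epsilon>} \<and>
           (\<forall>t\<in>{0<..\<epsilon>}. orthogonal_matrix (R t) \<and> (\<lambda>x. R t *v x) ` K \<subseteq> interior L)"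
proof -
  have cK: "compact K" "convex K" and cL: "compact L" "convex L"
    using assms(1,2) unfolding convex_body_def by auto
  have clK: "closed K" and clL: "closed L" using cK cL compact_imp_closed by auto
  have i0: "0 \<in> interior L" using assms(4) interior_mono[of "K \<inter> L" L] by auto
  define P where "P = polar L"
  have cP: "compact P" unfolding P_def using polar_compact[OF i0] .
  define g where "g z = inner (fst z) (snd z)" for z :: "(real^'n) \<times> (real^'n)"
  define C0 where "C0 = {z \<in> K \<times> P. g z = 1}"
  have gcont: "continuous_on UNIV g" unfolding g_def by (intro continuous_intros)
  have cC0: "compact C0"
  proof -
    have "C0 = (K \<times> P) \<inter> {z. g z = 1}" unfolding C0_def by auto
    moreover have "closed {z. g z = 1}" unfolding g_def by (intro closed_Collect_eq continuous_intros)
    ultimately show ?thesis using compact_Int_closed[OF compact_Times[OF cK(1) cP]] by simp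
  qed
  have g1: "g z \<le> 1" if "z \<in> K \<times> P" for z
    using that assms(3) unfolding g_def P_def polar_def by auto
  have C0c: "\<forall>z\<in>C0. contact_pair K L (fst z) (snd z)"
    using contact[OF assms(3) clK clL] unfolding C0_def P_def g_def by auto
  define phi where "phi z = tensor (snd z) (fst z) - tensor (fst z) (snd z)" for z :: "(real^'n) \<times> (real^'n)"
  have z0: "0 \<notin> convex hull (phi ` C0)"
    using no_zero_hull[OF assms(5) C0c] unfolding phi_def .
  moreover have "compact (phi ` C0)"
    using cC0 unfolding phi_def tensor_def
    by (intro compact_continuous_image continuous_intros)
  then have clH: "closed (convex hull (phi ` C0))" using compact_convex_hull compact_imp_closed by blast
  obtain a b where ab: "0 < b" "\<forall>M\<in>convex hull (phi ` C0). inner a M > b"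
    using separating_hyperplane_closed_0[OF convex_convex_hull clH z0] by blast
  define S where "S = a - transpose a"
  define f where "f z = inner (snd z) (S *v fst z)" for z :: "(real^'n) \<times> (real^'n)"
  have fphi: "f z = inner a (phi z)" for z
    unfolding f_def phi_def S_def by (rule skew_formula)
  have fC0: "f z > b" if "z \<in> C0" for z
    using ab(2) that hull_subset[of "phi ` C0" convex] unfolding fphi by auto
  have mvc: "continuous_on UNIV (\<lambda>z::(real^'n) \<times> (real^'n). S *v fst z)"
    using linear_continuous_on_compose[OF continuous_on_fst[OF continuous_on_id], of "(*v) S"] by simp
  have fcont: "continuous_on UNIV f" unfolding f_def by (intro continuous_intros mvc)
  define F where "F = {z \<in> K \<times> P. f z \<le> b}"
  have cF: "compact F"
  proof -
    have "F = (K \<times> P) \<inter> {z. f z \<le> b}" unfolding F_def by auto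
    moreover have "closed {z. f z \<le> b}" by (intro closed_Collect_le fcont continuous_intros)
    ultimately show ?thesis using compact_Int_closed[OF compact_Times[OF cK(1) cP]] by simp
  qed
  obtain \<eta> where eta: "\<eta> > 0" "\<forall>z\<in>F. g z \<le> 1 - \<eta>"
  proof (cases "F = {}")
    case True then show ?thesis using that[of 1] by auto
  next
    case False
    have "compact (g ` F)" using cF gcont by (intro compact_continuous_image) (auto intro: continuous_on_subset)
    then obtain z0 where z0: "z0 \<in> F" "\<forall>z\<in>F. g z \<le> g z0"
      using compact_attains_sup[of "g ` F"] False by auto
    have "g z0 \<le> 1" using g1 z0 unfolding F_def by auto
    moreover have "g z0 \<noteq> 1" using z0 fC0[of z0] unfolding F_def C0_def by auto
    ultimately show ?thesis using that[of "1 - g z0"] z0 by auto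
  qed
  obtain Kb where Kb: "Kb > 0" "\<forall>x\<in>K. norm x \<le> Kb"
    using compact_imp_bounded[OF cK(1)] bounded_pos by blast
  obtain Pb where Pb: "Pb > 0" "\<forall>x\<in>P. norm x \<le> Pb"
    using compact_imp_bounded[OF cP] bounded_pos by blast
  obtain \<beta> where beta: "\<beta> > 0" "\<And>x. norm (S *v x) \<le> \<beta> * norm x"
    by (rule linear_bounded_pos[OF matrix_vector_mul_linear[of S]]) blast
  define N where "N = Pb * Kb * \<beta>"
  define M where "M = \<beta> * \<beta> * Kb * Pb"
  have N0: "N > 0" "M > 0" unfolding N_def M_def using Kb Pb beta by auto
  define t where "t = min 1 (min (\<eta> / (2*(N+M)+1)) (b / (2*M+1)))"
  have t0: "t > 0" unfolding t_def using eta(1) ab(1) N0 by auto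
  have t1: "t \<le> 1" unfolding t_def by auto
  have t2: "2*t*(N+M) < \<eta>"
  proof -
    have "t \<le> \<eta> / (2*(N+M)+1)" unfolding t_def by auto
    then have "t * (2*(N+M)+1) \<le> \<eta>" using N0 by (simp add: pos_le_divide_eq)
    then show ?thesis using t0 by (simp add: algebra_simps)
  qed
  have t3: "t * M < b"
  proof -
    have "t \<le> b / (2*M+1)" unfolding t_def by auto
    then have "t * (2*M+1) \<le> b" using N0 by (simp add: pos_le_divide_eq)
    moreover have "t * M \<ge> 0" using t0 N0 by simp
    ultimately show ?thesis using t0 by (simp add: algebra_simps)
  qed
  have "\<exists>R. orthogonal_matrix R \<and> (\<forall>x. \<exists>y. norm y \<le> norm x \<and>
     R *v x = x - (2*t) *\<^sub>R (S *v x) + (2*t^2) *\<^sub>R (S *v (S *v y)))"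
    by (rule cayley) (simp add: S_def skew0)
  then obtain R where R: "orthogonal_matrix R" "\<forall>x. \<exists>y. norm y \<le> norm x \<and>
     R *v x = x - (2*t) *\<^sub>R (S *v x) + (2*t^2) *\<^sub>R (S *v (S *v y))"
    by blast
  have "R *v x \<in> interior L" if x: "x \<in> K" for x
  proof (rule interior_char[OF cL(1) cL(2) i0], intro ballI)
    fix p assume p: "p \<in> polar L"
    then have pP: "p \<in> P" unfolding P_def .
    obtain y where y: "norm y \<le> norm x"
      "R *v x = x - (2*t) *\<^sub>R (S *v x) + (2*t^2) *\<^sub>R (S *v (S *v y))" using R(2) by blast
    define e where "e = inner (S *v (S *v y)) p"
    have ee: "inner (R *v x) p = g (x,p) - 2*t * f (x,p) + 2*t^2 * e"
      unfolding y(2) e_def g_def f_def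
      by (simp add: inner_commute[of x p] inner_commute[of "S *v (S *v y)" p] inner_commute[of "S *v x" p] inner_add_left inner_diff_left)
    have np: "norm p \<le> Pb" using Pb pP by auto
    have nx: "norm x \<le> Kb" using Kb x by auto
    have "norm (S *v (S *v y)) \<le> \<beta> * (\<beta> * Kb)"
    proof -
      have "norm (S *v y) \<le> \<beta> * Kb"
        using beta(2)[of y] y(1) nx beta(1) by (meson order_trans mult_left_mono less_imp_le)
      then show ?thesis
        using beta(2)[of "S *v y"] beta(1) by (meson order_trans mult_left_mono less_imp_le)
    qed
    then have "norm (S *v (S *v y)) * norm p \<le> (\<beta> * (\<beta> * Kb)) * Pb"
      using np beta(1) Kb(1) by (intro mult_mono) auto
    then have eM: "\<bar>e\<bar> \<le> M" unfolding e_def M_def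
      using Cauchy_Schwarz_ineq2[of "S *v (S *v y)" p] by (simp add: mult_ac)
    have "norm (S *v x) \<le> \<beta> * Kb"
      using beta(2)[of x] nx beta(1) by (meson order_trans mult_left_mono less_imp_le)
    then have "norm p * norm (S *v x) \<le> Pb * (\<beta> * Kb)"
      using np Pb(1) by (intro mult_mono) auto
    then have fN: "\<bar>f (x,p)\<bar> \<le> N" unfolding f_def N_def
      using Cauchy_Schwarz_ineq2[of p "S *v x"] by (simp add: mult_ac)
    have gle: "g (x,p) \<le> 1" using g1 x pP by auto
    have tt: "t^2 \<le> t" using t0 t1 by (simp add: power2_eq_square mult_left_le)
    have te: "t^2 * e \<le> t * M"
    proof -
      have "t^2 * e \<le> t^2 * M" using eM by (intro mult_left_mono) auto
      also have "\<dots> \<le> t * M" using tt N0 by (intro mult_right_mono) auto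
      finally show ?thesis .
    qed
    show "inner (R *v x) p < 1"
    proof (cases "f (x,p) \<le> b")
      case True
      then have "(x,p) \<in> F" unfolding F_def using x pP by auto
      then have "g (x,p) \<le> 1 - \<eta>" using eta by auto
      moreover have "- (t * f (x,p)) \<le> t * N" using fN t0
        by (metis abs_le_iff mult_left_mono less_imp_le minus_le_iff mult_minus_right)
      ultimately show ?thesis unfolding ee using te t2 by (simp add: algebra_simps)
    next
      case False
      then have "t * b < t * f (x,p)" using t0 by simp
      moreover have "t^2 * e \<le> t^2 * M" using eM by (intro mult_left_mono) auto
      moreover have "t^2 * M < t * b"
        using mult_strict_left_mono[OF t3 t0] by (simp add: power2_eq_square mult_ac)
      ultimately show ?thesis unfolding ee using gle by (simp add: algebra_simps)
    qed
  qed
  then show ?thesis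
    by (intro exI[of _ 1] conjI exI[of _ "\<lambda>_. R"]) (auto simp: R(1))
qed

end
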